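(* Consider the Cannings model described in the context and suppose $\lim_{N\to\infty}c_N=0$. Then there exists a sequence of positive numbers $(a_N)_{N\ge1}$ such that: \begin{enumerate} \item $S_N/a_N\to1$ in probability as $N\to\infty$; \item there exists $\delta>0$ such that $\lim_{N\to\infty}c_N^{-1}\,\mathbb{P}\big(S_N-\max_{1\le k\le N}X_{k,N}<\delta a_N\big)=0$. \end{enumerate}
   Context: Cannings model with i.i.d. offspring numbers and sampling: for each $N$, let $X_{1,N},\dots,X_{N,N}$ be i.i.d. random variables with values in $\{1,2,\dots\}$, and $S_N=X_{1,N}+\cdots+X_{N,N}$. Conditionally on these, $N$ of the $S_N$ offspring are sampled uniformly without replacement to form the next generation, and $\nu_{k,N}$ is the number of sampled offspring of the $k$th individual. $(x)_k$ is the falling factorial and $c_N=E[(\nu_{1,N})_2]/(N-1)$. *)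

theory Defs
  imports "HOL-Probability.Probability"
begin

definition ff2 :: "nat \<Rightarrow> real" where
  "ff2 n = real n * (real n - 1)"

definition offspring :: "nat \<Rightarrow> nat pmf \<Rightarrow> (nat \<Rightarrow> nat) pmf" where
  "offspring N q = Pi_pmf {..<N} 0 (\<lambda>_. q)"

definition S_tot :: "nat \<Rightarrow> (nat \<Rightarrow> nat) \<Rightarrow> nat" where
  "S_tot N x = (\<Sum>k<N. x k)"

definition Max_off :: "nat \<Rightarrow> (nat \<Rightarrow> nat) \<Rightarrow> nat" where
  "Max_off N x = Max (x ` {..<N})"

definition pool :: "nat \<Rightarrow> (nat \<Rightarrow> nat) \<Rightarrow> (nat \<times> nat) set" where
  "pool N x = {(k, i). k < N \<and> i < x k}"

text \<open>Joint model: offspring numbers, then a uniform sample of N of the S_N offspring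
  without replacement (a uniformly random N-element subset of the pool).\<close>
definition cannings :: "nat \<Rightarrow> nat pmf \<Rightarrow> ((nat \<Rightarrow> nat) \<times> (nat \<times> nat) set) pmf" where
  "cannings N q = do {
     x \<leftarrow> offspring N q;
     A \<leftarrow> pmf_of_set {A. A \<subseteq> pool N x \<and> card A = N};
     return_pmf (x, A) }"

definition nu :: "nat \<Rightarrow> (nat \<times> nat) set \<Rightarrow> nat" where
  "nu k A = card {i. (k, i) \<in> A}"

text \<open>c_N = E[(nu_{1,N})_2] / (N - 1); the first individual has index 0.\<close>
definition cN :: "nat \<Rightarrow> nat pmf \<Rightarrow> real" where
  "cN N q = measure_pmf.expectation (cannings N q) (\<lambda>(x, A). ff2 (nu 0 A)) / (real N - 1)"

end

theory Submission
  imports Defs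
begin


definition offd :: "'a set \<Rightarrow> ('a \<times> 'a) set" where
  "offd C = {(a,b). a \<in> C \<and> b \<in> C \<and> a \<noteq> b}"

lemma card_offd: assumes "finite C" shows "card (offd C) = card C * (card C - 1)"
proof -
  have "offd C = C \<times> C - (\<lambda>a. (a,a)) ` C" by (auto simp: offd_def)
  moreover have "card ((\<lambda>a. (a,a)) ` C) = card C" by (simp add: card_image inj_on_def)
  ultimately show ?thesis using assms
    by (simp add: card_Diff_subset card_cartesian_product finite_imageI image_subset_iff diff_mult_distrib2)
qed

lemma card_subsets_two:
  assumes P: "finite P" and ab: "a \<in> P" "b \<in> P" "a \<noteq> b" and k: "k \<ge> 2"
  shows "card {A. A \<subseteq> P \<and> card A = k \<and> a \<in> A \<and> b \<in> A} = (card P - 2) choose (k - 2)"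
proof -
  have "bij_betw (\<lambda>B. B \<union> {a,b}) {B. B \<subseteq> P - {a,b} \<and> card B = k - 2}
        {A. A \<subseteq> P \<and> card A = k \<and> a \<in> A \<and> b \<in> A}"
  proof (rule bij_betw_byWitness[where f' = "\<lambda>A. A - {a,b}"])
    show "\<forall>B\<in>{B. B \<subseteq> P - {a, b} \<and> card B = k - 2}. B \<union> {a, b} - {a, b} = B" by auto
    show "\<forall>A\<in>{A. A \<subseteq> P \<and> card A = k \<and> a \<in> A \<and> b \<in> A}. A - {a, b} \<union> {a, b} = A" by auto
    show "(\<lambda>B. B \<union> {a, b}) ` {B. B \<subseteq> P - {a, b} \<and> card B = k - 2}
      \<subseteq> {A. A \<subseteq> P \<and> card A = k \<and> a \<in> A \<and> b \<in> A}"
    proof (rule image_subsetI)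
      fix B assume "B \<in> {B. B \<subseteq> P - {a, b} \<and> card B = k - 2}"
      hence B: "B \<subseteq> P - {a,b}" "card B = k - 2" by auto
      have fB: "finite B" using B P finite_subset by blast
      have "card (B \<union> {a,b}) = card B + card {a,b}" using B fB by (intro card_Un_disjoint) auto
      hence "card (B \<union> {a,b}) = k" using B ab k by simp
      thus "B \<union> {a,b} \<in> {A. A \<subseteq> P \<and> card A = k \<and> a \<in> A \<and> b \<in> A}" using B ab by auto
    qed
    show "(\<lambda>A. A - {a, b}) ` {A. A \<subseteq> P \<and> card A = k \<and> a \<in> A \<and> b \<in> A}
      \<subseteq> {B. B \<subseteq> P - {a, b} \<and> card B = k - 2}"
    proof (rule image_subsetI)
      fix A assume "A \<in> {A. A \<subseteq> P \<and> card A = k \<and> a \<in> A \<and> b \<in> A}"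
      hence A: "A \<subseteq> P" "card A = k" "a \<in> A" "b \<in> A" by auto
      have "finite A" using A P finite_subset by blast
      hence "card (A - {a,b}) = card A - 2" using A ab by (simp add: card_Diff_subset)
      thus "A - {a,b} \<in> {B. B \<subseteq> P - {a, b} \<and> card B = k - 2}" using A by auto
    qed
  qed
  hence "card {A. A \<subseteq> P \<and> card A = k \<and> a \<in> A \<and> b \<in> A} = card {B. B \<subseteq> P - {a,b} \<and> card B = k - 2}"
    by (simp add: bij_betw_same_card)
  also have "\<dots> = card (P - {a,b}) choose (k - 2)" using P by (intro n_subsets) auto
  also have "card (P - {a,b}) = card P - 2" using P ab by (simp add: card_Diff_subset)
  finally show ?thesis .
qed

lemma choose_ratio:
  assumes "2 \<le> k" "k \<le> n"
  shows "real ((n - 2) choose (k - 2)) / real (n choose k) = real k * (real k - 1) / (real n * (real n - 1))"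
proof -
  define m where "m = n - 2"
  define j where "j = k - 2"
  have mj: "n = Suc (Suc m)" "k = Suc (Suc j)" using assms unfolding m_def j_def by arith+
  have e1: "Suc (Suc m) * (Suc m choose Suc j) = (Suc (Suc m) choose Suc (Suc j)) * Suc (Suc j)"
    by (rule Suc_times_binomial_eq)
  have e2: "Suc m * (m choose j) = (Suc m choose Suc j) * Suc j"
    by (rule Suc_times_binomial_eq)
  have c: "real (Suc (Suc j)) * real (Suc j) * real (Suc (Suc m) choose Suc (Suc j))
      = real (Suc (Suc m)) * real (Suc m) * real (m choose j)"
  proof -
    have "real (Suc (Suc m) choose Suc (Suc j)) * real (Suc (Suc j)) = real (Suc (Suc m)) * real (Suc m choose Suc j)"
      using e1 by (metis of_nat_mult)
    moreover have "real (Suc m choose Suc j) * real (Suc j) = real (Suc m) * real (m choose j)"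
      using e2 by (metis of_nat_mult)
    ultimately show ?thesis by (metis mult.commute mult.left_commute)
  qed
  have "Suc (Suc j) \<le> Suc (Suc m)" using assms mj by simp
  hence "(Suc (Suc m) choose Suc (Suc j)) > 0" by (rule zero_less_binomial)
  hence pos: "real (Suc (Suc m) choose Suc (Suc j)) > 0" by (simp only: of_nat_0_less_iff)
  have "real ((n - 2) choose (k - 2)) / real (n choose k)
      = real (m choose j) / real (Suc (Suc m) choose Suc (Suc j))" using mj by simp
  also have "\<dots> = real (Suc (Suc j)) * real (Suc j) / (real (Suc (Suc m)) * real (Suc m))"
    using c pos by (simp add: divide_simps)
  also have "\<dots> = real k * (real k - 1) / (real n * (real n - 1))" using mj by simp
  finally show ?thesis .
qed

lemma pool_eq: "pool N x = Sigma {..<N} (\<lambda>k. {..<x k})"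
  by (auto simp: pool_def)

lemma finite_pool: "finite (pool N x)" by (simp add: pool_eq)

lemma card_pool: "card (pool N x) = S_tot N x"
  by (simp add: pool_eq S_tot_def card_SigmaI)

lemma ff2_card_offd: "finite C \<Longrightarrow> ff2 (card C) = real (card (offd C))"
  by (cases "card C") (auto simp: card_offd ff2_def algebra_simps)

lemma hyp_exp:
  assumes N: "N \<ge> 2" and x: "\<forall>k<N. x k \<ge> 1"
  shows "measure_pmf.expectation (pmf_of_set {A. A \<subseteq> pool N x \<and> card A = N}) (\<lambda>A. ff2 (nu 0 A))
     = ff2 (x 0) * (real N * (real N - 1)) / (real (S_tot N x) * (real (S_tot N x) - 1))"
proof -
  define P where "P = pool N x"
  define F where "F = {A. A \<subseteq> P \<and> card A = N}"
  define S where "S = S_tot N x"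
  define B0 where "B0 = {0::nat} \<times> {..<x 0}"
  define Od where "Od = offd B0"
  have finP: "finite P" unfolding P_def by (rule finite_pool)
  have cardP: "card P = S" unfolding P_def S_def by (rule card_pool)
  have SN: "S \<ge> N"
  proof -
    have "S = (\<Sum>k<N. x k)" by (simp add: S_def S_tot_def)
    also have "\<dots> \<ge> (\<Sum>k<N. 1)" using x by (intro sum_mono) auto
    finally show ?thesis by simp
  qed
  have finF: "finite F" unfolding F_def
    by (rule finite_subset[of _ "Pow P"]) (use finP in auto)
  have cardF: "card F = S choose N" unfolding F_def using n_subsets[OF finP] cardP by simp
  have Fne: "F \<noteq> {}"
  proof -
    obtain T where "T \<subseteq> P" "card T = N" using obtain_subset_with_card_n[of N P] SN cardP by auto
    thus ?thesis unfolding F_def by auto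
  qed
  have B0P: "B0 \<subseteq> P" using N x unfolding B0_def P_def pool_def by auto
  have finB0: "finite B0" unfolding B0_def by simp
  have finO: "finite Od" unfolding Od_def offd_def 
    by (rule finite_subset[of _ "B0 \<times> B0"]) (use finB0 in auto)
  have cardO: "real (card Od) = ff2 (x 0)" unfolding Od_def
    using ff2_card_offd[OF finB0] by (simp add: B0_def)
  have nuA: "ff2 (nu 0 A) = (\<Sum>p\<in>Od. if fst p \<in> A \<and> snd p \<in> A then 1 else 0)" if A: "A \<in> F" for A
  proof -
    have "bij_betw (Pair 0) {i. (0,i) \<in> A} (A \<inter> B0)"
      using A unfolding bij_betw_def inj_on_def F_def B0_def P_def pool_def by auto
    hence "nu 0 A = card (A \<inter> B0)" unfolding nu_def by (rule bij_betw_same_card)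
    hence "ff2 (nu 0 A) = real (card (offd (A \<inter> B0)))" using finB0 by (simp add: ff2_card_offd)
    also have "offd (A \<inter> B0) = {p \<in> Od. fst p \<in> A \<and> snd p \<in> A}" unfolding Od_def offd_def by auto
    also have "real (card \<dots>) = (\<Sum>p\<in>Od. if fst p \<in> A \<and> snd p \<in> A then 1 else 0)"
      using finO by (simp add: sum.If_cases Int_def)
    finally show ?thesis .
  qed
  have "(\<Sum>A\<in>F. ff2 (nu 0 A)) = (\<Sum>A\<in>F. \<Sum>p\<in>Od. if fst p \<in> A \<and> snd p \<in> A then 1 else (0::real))"
    using nuA by (rule sum.cong[OF refl])
  also have "\<dots> = (\<Sum>p\<in>Od. \<Sum>A\<in>F. if fst p \<in> A \<and> snd p \<in> A then 1 else (0::real))"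
    by (rule sum.swap)
  also have "\<dots> = (\<Sum>p\<in>Od. real ((S - 2) choose (N - 2)))"
  proof (rule sum.cong[OF refl])
    fix p assume p: "p \<in> Od"
    then obtain a b where ab: "p = (a,b)" "a \<in> B0" "b \<in> B0" "a \<noteq> b" unfolding Od_def offd_def by auto
    have "(\<Sum>A\<in>F. if fst p \<in> A \<and> snd p \<in> A then 1 else (0::real)) = real (card {A \<in> F. a \<in> A \<and> b \<in> A})"
      using finF by (simp add: sum.If_cases ab Int_def)
    also have "{A \<in> F. a \<in> A \<and> b \<in> A} = {A. A \<subseteq> P \<and> card A = N \<and> a \<in> A \<and> b \<in> A}"
      unfolding F_def by auto
    also have "card \<dots> = (card P - 2) choose (N - 2)"
      using ab B0P N finP by (intro card_subsets_two) auto
    finally show "(\<Sum>A\<in>F. if fst p \<in> A \<and> snd p \<in> A then 1 else (0::real)) = real ((S - 2) choose (N - 2))"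
      by (simp add: cardP)
  qed
  also have "\<dots> = ff2 (x 0) * real ((S - 2) choose (N - 2))" using cardO by simp
  finally have sumF: "(\<Sum>A\<in>F. ff2 (nu 0 A)) = ff2 (x 0) * real ((S - 2) choose (N - 2))" .
  have "measure_pmf.expectation (pmf_of_set F) (\<lambda>A. ff2 (nu 0 A)) = (\<Sum>A\<in>F. ff2 (nu 0 A)) / card F"
    by (intro integral_pmf_of_set Fne finF)
  also have "\<dots> = ff2 (x 0) * (real ((S - 2) choose (N - 2)) / real (S choose N))"
    by (simp add: sumF cardF)
  also have "\<dots> = ff2 (x 0) * (real N * (real N - 1) / (real S * (real S - 1)))"
    using choose_ratio[of N S] N SN by simp
  finally show ?thesis unfolding F_def P_def S_def by simp
qed



lemma pmf_integrable_bounded: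
  fixes f :: "'a \<Rightarrow> real"
  assumes "\<And>y. \<bar>f y\<bar> \<le> B"
  shows "integrable (measure_pmf p) f"
  by (rule measure_pmf.integrable_const_bound[where B=B]) (use assms in auto)

lemma exp_bind_nonneg:
  fixes f :: "'b \<Rightarrow> real"
  assumes f0: "\<And>y. 0 \<le> f y" and fB: "\<And>y. f y \<le> B"
  shows "measure_pmf.expectation (bind_pmf M K) f = measure_pmf.expectation M (\<lambda>x. measure_pmf.expectation (K x) f)"
proof -
  have bf: "\<bar>f y\<bar> \<le> B" for y using f0 fB by (metis abs_of_nonneg)
  have g0: "0 \<le> measure_pmf.expectation (K x) f" for x by (intro Bochner_Integration.integral_nonneg) (use f0 in auto)
  have gB: "measure_pmf.expectation (K x) f \<le> B" for x
  proof -
    have "measure_pmf.expectation (K x) f \<le> measure_pmf.expectation (K x) (\<lambda>_. B)"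
      by (intro integral_mono pmf_integrable_bounded[OF bf]) (use fB in auto)
    thus ?thesis by simp
  qed
  have bg: "\<bar>measure_pmf.expectation (K x) f\<bar> \<le> B" for x using g0 gB by (metis abs_of_nonneg)
  have "ennreal (measure_pmf.expectation (bind_pmf M K) f) = (\<integral>\<^sup>+y. ennreal (f y) \<partial>bind_pmf M K)"
    by (rule nn_integral_eq_integral[symmetric]) (use f0 pmf_integrable_bounded[OF bf] in auto)
  also have "\<dots> = (\<integral>\<^sup>+x. \<integral>\<^sup>+y. ennreal (f y) \<partial>K x \<partial>M)" by simp
  also have "\<dots> = (\<integral>\<^sup>+x. ennreal (measure_pmf.expectation (K x) f) \<partial>M)"
    by (intro nn_integral_cong nn_integral_eq_integral) (use f0 pmf_integrable_bounded[OF bf] in auto)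
  also have "\<dots> = ennreal (measure_pmf.expectation M (\<lambda>x. measure_pmf.expectation (K x) f))"
    by (rule nn_integral_eq_integral) (use g0 pmf_integrable_bounded[OF bg] in auto)
  finally show ?thesis
    by (subst (asm) ennreal_inj) (auto intro!: Bochner_Integration.integral_nonneg g0 f0)
qed



lemma off_support:
  assumes "x \<in> set_pmf (offspring N q)" "set_pmf q \<subseteq> {1..}"
  shows "\<forall>k<N. x k \<ge> 1" "\<forall>k. k \<ge> N \<longrightarrow> x k = 0" "\<forall>k<N. x k \<in> set_pmf q"
  using assms by (auto simp: offspring_def set_Pi_pmf PiE_dflt_def subset_iff)

lemma exp_cong_support:
  "(\<And>x. x \<in> set_pmf p \<Longrightarrow> f x = g x) \<Longrightarrow> measure_pmf.expectation p f = measure_pmf.expectation p g"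
  by (intro integral_cong_AE) (auto simp: AE_measure_pmf_iff)

lemma S_ge: assumes "\<forall>k<N. x k \<ge> 1" shows "S_tot N x \<ge> N"
proof -
  have "S_tot N x = (\<Sum>k<N. x k)" by (simp add: S_tot_def)
  also have "\<dots> \<ge> (\<Sum>k<N. 1)" using assms by (intro sum_mono) auto
  finally show ?thesis by simp
qed

lemma nu_le: "finite A \<Longrightarrow> nu k A \<le> card A"
proof -
  assume A: "finite A"
  have "nu k A = card (Pair k ` {i. (k,i) \<in> A})" unfolding nu_def by (rule card_image[symmetric]) (simp add: inj_on_def)
  also have "\<dots> \<le> card A" using A by (intro card_mono) auto
  finally show ?thesis .
qed

lemma ff2_nonneg: "0 \<le> ff2 n"
  by (cases n) (auto simp: ff2_def)

lemma ff2_le: "n \<le> N \<Longrightarrow> ff2 n \<le> real N * real N"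
  unfolding ff2_def by (cases n) (auto intro!: mult_mono)

lemma cN_eq:
  assumes N: "N \<ge> 2" and q: "set_pmf q \<subseteq> {1..}"
  shows "cN N q = real N * measure_pmf.expectation (offspring N q)
            (\<lambda>x. ff2 (x 0) / (real (S_tot N x) * (real (S_tot N x) - 1)))"
proof -
  define F where "F x = {A. A \<subseteq> pool N x \<and> card A = N}" for x
  define f where "f = (\<lambda>(x::nat\<Rightarrow>nat, A::(nat\<times>nat) set). ff2 (nu 0 A))"
  define f' where "f' = (\<lambda>y. max 0 (min (f y) (real N * real N)))"
  have cann: "cannings N q = bind_pmf (offspring N q) (\<lambda>x. map_pmf (Pair x) (pmf_of_set (F x)))"
    unfolding cannings_def F_def map_pmf_def by simp
  have goodx: "finite (F x) \<and> F x \<noteq> {}" if "x \<in> set_pmf (offspring N q)" for x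
  proof -
    have x1: "\<forall>k<N. x k \<ge> 1" using off_support[OF that q] by auto
    have finF: "finite (F x)" unfolding F_def
      by (rule finite_subset[of _ "Pow (pool N x)"]) (use finite_pool in auto)
    obtain T where "T \<subseteq> pool N x" "card T = N"
      using obtain_subset_with_card_n[of N "pool N x"] S_ge[OF x1] card_pool by metis
    thus ?thesis using finF unfolding F_def by auto
  qed
  have ff: "f y = f' y" if yin: "y \<in> set_pmf (cannings N q)" for y
  proof -
    obtain x where x: "x \<in> set_pmf (offspring N q)" and y': "y \<in> set_pmf (map_pmf (Pair x) (pmf_of_set (F x)))"
      using yin unfolding cann by auto
    obtain A where y: "y = (x, A)" and A: "A \<in> F x"
      using y' goodx[OF x] by auto
    have finA: "finite A" using A finite_pool[of N x] unfolding F_def by (auto intro: finite_subset)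
    have "nu 0 A \<le> N" using nu_le[OF finA] A unfolding F_def by auto
    hence "f y \<le> real N * real N" "f y \<ge> 0" unfolding f_def y
      by (auto intro: ff2_le ff2_nonneg)
    thus ?thesis unfolding f'_def by simp
  qed
  have "measure_pmf.expectation (cannings N q) f = measure_pmf.expectation (cannings N q) f'"
    using ff by (rule exp_cong_support)
  also have "\<dots> = measure_pmf.expectation (offspring N q)
      (\<lambda>x. measure_pmf.expectation (map_pmf (Pair x) (pmf_of_set (F x))) f')"
    unfolding cann by (rule exp_bind_nonneg[where B="real N * real N"]) (auto simp: f'_def)
  also have "\<dots> = measure_pmf.expectation (offspring N q)
      (\<lambda>x. ff2 (x 0) * (real N * (real N - 1)) / (real (S_tot N x) * (real (S_tot N x) - 1)))"
  proof (rule exp_cong_support)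
    fix x assume x: "x \<in> set_pmf (offspring N q)"
    have "measure_pmf.expectation (map_pmf (Pair x) (pmf_of_set (F x))) f'
        = measure_pmf.expectation (map_pmf (Pair x) (pmf_of_set (F x))) f"
      by (rule exp_cong_support, rule ff[symmetric]) (use x goodx in \<open>auto simp: cann\<close>)
    also have "\<dots> = measure_pmf.expectation (pmf_of_set (F x)) (\<lambda>A. ff2 (nu 0 A))"
      by (simp add: f_def)
    also have "\<dots> = ff2 (x 0) * (real N * (real N - 1)) / (real (S_tot N x) * (real (S_tot N x) - 1))"
      unfolding F_def by (rule hyp_exp[OF N]) (use off_support[OF x q] in auto)
    finally show "measure_pmf.expectation (map_pmf (Pair x) (pmf_of_set (F x))) f' = \<dots>" .
  qed
  also have "\<dots> = (real N * (real N - 1)) * measure_pmf.expectation (offspring N q)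
      (\<lambda>x. ff2 (x 0) / (real (S_tot N x) * (real (S_tot N x) - 1)))"
  proof -
    have "(\<lambda>x. ff2 (x 0) * (real N * (real N - 1)) / (real (S_tot N x) * (real (S_tot N x) - 1)))
      = (\<lambda>x. (real N * (real N - 1)) * (ff2 (x 0) / (real (S_tot N x) * (real (S_tot N x) - 1))))"
      by (simp add: fun_eq_iff)
    thus ?thesis by (simp only: integral_mult_right_zero)
  qed
  finally have "measure_pmf.expectation (cannings N q) f = (real N * (real N - 1)) * measure_pmf.expectation (offspring N q)
      (\<lambda>x. ff2 (x 0) / (real (S_tot N x) * (real (S_tot N x) - 1)))" .
  moreover have "real N - 1 > 0" using N by simp
  ultimately show ?thesis unfolding cN_def f_def by (simp add: field_simps)
qed



lemma integrable_pmf_AE_bound: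
  fixes f :: "'a \<Rightarrow> real"
  assumes "\<And>x. x \<in> set_pmf p \<Longrightarrow> \<bar>f x\<bar> \<le> B"
  shows "integrable (measure_pmf p) f"
  by (rule measure_pmf.integrable_const_bound[where B=B]) (use assms in \<open>auto simp: AE_measure_pmf_iff\<close>)

lemma off_component:
  fixes g :: "nat \<Rightarrow> real"
  assumes "k < N"
  shows "measure_pmf.expectation (offspring N q) (\<lambda>x. g (x k)) = measure_pmf.expectation q g"
proof -
  have "map_pmf (\<lambda>x. x k) (offspring N q) = q"
    unfolding offspring_def using assms by (subst Pi_pmf_component) auto
  hence "measure_pmf.expectation (map_pmf (\<lambda>x. x k) (offspring N q)) g = measure_pmf.expectation q g" by simp
  thus ?thesis by simp
qed

lemma off_pair:
  fixes g :: "nat \<Rightarrow> real"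
  assumes jk: "j < N" "k < N" "j \<noteq> k" and g0: "\<And>v. 0 \<le> g v" and gB: "\<And>v. g v \<le> B"
  shows "measure_pmf.expectation (offspring N q) (\<lambda>x. g (x j) * g (x k)) = (measure_pmf.expectation q g)^2"
proof -
  define f where "f i v = (if i \<in> {j,k} then g v else 1)" for i v
  have f1: "i \<notin> {j,k} \<Longrightarrow> f i = (\<lambda>_. 1)" for i by (auto simp: f_def)
  have int: "integrable (measure_pmf q) (f i)" for i
    unfolding f_def by (rule pmf_integrable_bounded[where B="max B 1"]) (use g0 gB in \<open>auto simp: abs_of_nonneg intro: max.coboundedI1\<close>)
  have "measure_pmf.expectation (offspring N q) (\<lambda>x. \<Prod>i\<in>{..<N}. f i (x i))
      = (\<Prod>i\<in>{..<N}. measure_pmf.expectation q (f i))"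
    unfolding offspring_def
    apply (rule expectation_prod_Pi_pmf)
      apply simp
     apply (rule int)
    apply (auto simp: f_def g0)
    done
  moreover have "(\<lambda>x. \<Prod>i\<in>{..<N}. f i (x i)) = (\<lambda>x. g (x j) * g (x k))"
  proof
    fix x
    have "(\<Prod>i\<in>{..<N}. f i (x i)) = (\<Prod>i\<in>{j,k}. f i (x i))"
      by (rule prod.mono_neutral_right) (use jk in \<open>auto simp: f_def\<close>)
    also have "\<dots> = g (x j) * g (x k)" using jk by (simp add: f_def)
    finally show "(\<Prod>i\<in>{..<N}. f i (x i)) = g (x j) * g (x k)" .
  qed
  moreover have "(\<Prod>i\<in>{..<N}. measure_pmf.expectation q (f i)) = (\<Prod>i\<in>{j,k}. measure_pmf.expectation q (f i))"
    by (rule prod.mono_neutral_right) (use jk f1 in auto)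
  moreover have "(\<Prod>i\<in>{j,k}. measure_pmf.expectation q (f i)) = (measure_pmf.expectation q g)^2"
  proof -
    have "f j = g" "f k = g" by (auto simp: f_def fun_eq_iff)
    thus ?thesis using jk by (simp add: power2_eq_square)
  qed
  ultimately show ?thesis by simp
qed

lemma off_exp:
  fixes g :: "nat \<Rightarrow> real"
  assumes g0: "\<And>v. 0 \<le> g v" and l: "l \<ge> 0"
  shows "measure_pmf.expectation (offspring N q) (\<lambda>x. exp (- l * (\<Sum>k<N. g (x k))))
       = (measure_pmf.expectation q (\<lambda>v. exp (- l * g v)))^N"
proof -
  have int: "integrable (measure_pmf q) (\<lambda>v. exp (- l * g v))"
    by (rule pmf_integrable_bounded[where B=1]) (use g0 l in \<open>auto simp: mult_nonneg_nonneg\<close>)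
  have "(\<lambda>x. exp (- l * (\<Sum>k<N. g (x k)))) = (\<lambda>x. \<Prod>k\<in>{..<N}. exp (- l * g (x k)))"
    by (simp add: fun_eq_iff exp_sum sum_distrib_left flip: sum_negf)
  moreover have "measure_pmf.expectation (offspring N q) (\<lambda>x. \<Prod>k\<in>{..<N}. exp (- l * g (x k)))
      = (\<Prod>k\<in>{..<N}. measure_pmf.expectation q (\<lambda>v. exp (- l * g v)))"
    unfolding offspring_def by (rule expectation_prod_Pi_pmf) (use int in auto)
  ultimately show ?thesis by simp
qed

lemma pair_prod_exp:
  fixes \<phi> \<psi> :: "_ \<Rightarrow> real"
  assumes "\<And>v. 0 \<le> \<phi> v" "\<And>v. \<phi> v \<le> B" "\<And>v. 0 \<le> \<psi> v" "\<And>v. \<psi> v \<le> B'"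
  shows "measure_pmf.expectation (pair_pmf p r) (\<lambda>z. \<phi> (fst z) * \<psi> (snd z))
       = measure_pmf.expectation p \<phi> * measure_pmf.expectation r \<psi>"
proof -
  have "measure_pmf.expectation (pair_pmf p r) (\<lambda>z. \<phi> (fst z) * \<psi> (snd z))
      = measure_pmf.expectation p (\<lambda>a. measure_pmf.expectation (map_pmf (Pair a) r) (\<lambda>z. \<phi> (fst z) * \<psi> (snd z)))"
    unfolding pair_pmf_def map_pmf_def[symmetric]
  proof (rule exp_bind_nonneg[where B="B * B'"])
    fix z show "0 \<le> \<phi> (fst z) * \<psi> (snd z)" using assms by simp
    show "\<phi> (fst z) * \<psi> (snd z) \<le> B * B'"
      by (rule mult_mono) (use assms in \<open>auto intro: order_trans[OF assms(1) assms(2)]\<close>)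
  qed
  also have "\<dots> = measure_pmf.expectation p (\<lambda>a. \<phi> a * measure_pmf.expectation r \<psi>)"
    by simp
  also have "\<dots> = measure_pmf.expectation p \<phi> * measure_pmf.expectation r \<psi>"
    by simp
  finally show ?thesis .
qed

lemma off_split:
  fixes \<phi> \<psi> :: "_ \<Rightarrow> real"
  assumes N: "N \<ge> 1"
    and b: "\<And>v. 0 \<le> \<phi> v" "\<And>v. \<phi> v \<le> B" "\<And>v. 0 \<le> \<psi> v" "\<And>v. \<psi> v \<le> B'"
    and dep: "\<And>x y. (\<And>k. k \<noteq> 0 \<Longrightarrow> x k = y k) \<Longrightarrow> \<psi> x = \<psi> y"
  shows "measure_pmf.expectation (offspring N q) (\<lambda>x. \<phi> (x 0) * \<psi> x)
       = measure_pmf.expectation q \<phi> * measure_pmf.expectation (offspring N q) \<psi>"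
proof -
  define R where "R = Pi_pmf {1..<N} 0 (\<lambda>_. q)"
  have ins: "{..<N} = insert 0 {1..<N}" using N by auto
  have off: "offspring N q = map_pmf (\<lambda>(y,f). f(0:=y)) (pair_pmf q R)"
    unfolding offspring_def R_def ins by (rule Pi_pmf_insert) auto
  have d: "\<psi> (f(0:=y)) = \<psi> f" for f y by (rule dep) auto
  have "measure_pmf.expectation (offspring N q) (\<lambda>x. \<phi> (x 0) * \<psi> x)
      = measure_pmf.expectation (pair_pmf q R) (\<lambda>z. \<phi> (fst z) * \<psi> (snd z))"
    unfolding off by (simp add: case_prod_unfold d)
  also have "\<dots> = measure_pmf.expectation q \<phi> * measure_pmf.expectation R \<psi>"
    by (rule pair_prod_exp) (use b in auto)
  also have "measure_pmf.expectation R \<psi> = measure_pmf.expectation (offspring N q) \<psi>"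
    unfolding off by (simp add: case_prod_unfold d)
  finally show ?thesis .
qed



lemma exp_neg_le: fixes u :: real assumes u: "0 \<le> u" shows "exp (-u) \<le> 1 - u + u^2/2"
proof -
  define h where "h t = 1 - t + t^2/2 - exp (-t)" for t :: real
  have "h 0 \<le> h u"
  proof (rule DERIV_nonneg_imp_increasing_open[OF u])
    fix x :: real assume x: "0 < x" "x < u"
    have "DERIV h x :> (-1 + x + exp (-x))" unfolding h_def
      by (auto intro!: derivative_eq_intros simp: power2_eq_square algebra_simps)
    moreover have "exp (-x) \<ge> 1 - x" using exp_ge_add_one_self[of "-x"] by simp
    ultimately show "\<exists>y. DERIV h x :> y \<and> 0 \<le> y" by (intro exI[of _ "-1 + x + exp (-x)"]) auto
  next
    show "continuous_on {0..u} h" unfolding h_def by (intro continuous_intros) auto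
  qed
  thus ?thesis by (simp add: h_def)
qed

definition clip :: "real \<Rightarrow> nat \<Rightarrow> real" where
  "clip t v = max 0 (min (real v - 1) t)"

lemma clip_nonneg: "0 \<le> clip t v" by (simp add: clip_def)
lemma clip_le: "0 \<le> t \<Longrightarrow> clip t v \<le> t" by (simp add: clip_def)
lemma clip_le_Y: "1 \<le> v \<Longrightarrow> clip t v \<le> real v - 1" by (simp add: clip_def)

definition med :: "nat \<Rightarrow> nat pmf \<Rightarrow> nat" where
  "med N q = (LEAST n. 1/2 \<le> measure_pmf.prob (offspring N q) {x. S_tot N x \<le> n})"

lemma med_exists: "\<exists>n. 1/2 \<le> measure_pmf.prob (offspring N q) {x. S_tot N x \<le> n}"
proof -
  let ?A = "\<lambda>n. {x. S_tot N x \<le> n}"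
  have "(\<lambda>n. measure_pmf.prob (offspring N q) (?A n)) \<longlonglongrightarrow> measure_pmf.prob (offspring N q) (\<Union>n. ?A n)"
    by (rule measure_pmf.finite_Lim_measure_incseq) (auto simp: incseq_def)
  moreover have "(\<Union>n. ?A n) = UNIV" by auto
  ultimately have "(\<lambda>n. measure_pmf.prob (offspring N q) (?A n)) \<longlonglongrightarrow> 1" by simp
  hence "eventually (\<lambda>n. measure_pmf.prob (offspring N q) (?A n) > 1/2) sequentially"
    by (rule order_tendstoD) simp
  thus ?thesis by (metis (mono_tags, lifting) eventually_sequentially less_eq_real_def order_refl)
qed

lemma med_le: "1/2 \<le> measure_pmf.prob (offspring N q) {x. S_tot N x \<le> med N q}"
  unfolding med_def using med_exists by (rule LeastI_ex)

lemma med_ge: "1/2 \<le> measure_pmf.prob (offspring N q) {x. med N q \<le> S_tot N x}"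
proof (cases "med N q = 0")
  case True
  hence "{x. med N q \<le> S_tot N x} = UNIV" by auto
  moreover have "measure_pmf.prob (offspring N q) UNIV = 1" by simp
  ultimately show ?thesis by simp
next
  case False
  hence n: "\<not> (1/2 \<le> measure_pmf.prob (offspring N q) {x. S_tot N x \<le> med N q - 1})"
    unfolding med_def by (intro not_less_Least) (auto simp: med_def)
  have e1: "{x. med N q \<le> S_tot N x} = UNIV - {x. S_tot N x \<le> med N q - 1}" using False by auto
  have e2: "measure_pmf.prob (offspring N q) (UNIV - {x. S_tot N x \<le> med N q - 1})
      = 1 - measure_pmf.prob (offspring N q) {x. S_tot N x \<le> med N q - 1}"
  proof -
    have "measure_pmf.prob (offspring N q) (UNIV - {x. S_tot N x \<le> med N q - 1})
       = measure_pmf.prob (offspring N q) UNIV - measure_pmf.prob (offspring N q) {x. S_tot N x \<le> med N q - 1}"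
      by (rule measure_pmf.finite_measure_Diff) auto
    thus ?thesis by simp
  qed
  show ?thesis unfolding e1 e2 using n by linarith
qed

lemma med_geN:
  assumes q: "set_pmf q \<subseteq> {1..}" and N: "N \<ge> 1"
  shows "med N q \<ge> N"
proof (rule ccontr)
  assume a: "\<not> N \<le> med N q"
  have "x \<notin> set_pmf (offspring N q)" if "S_tot N x \<le> med N q" for x
  proof
    assume "x \<in> set_pmf (offspring N q)"
    hence "S_tot N x \<ge> N" by (intro S_ge off_support(1)[OF _ q])
    thus False using a that by linarith
  qed
  hence "{x. S_tot N x \<le> med N q} \<inter> set_pmf (offspring N q) = {}" by blast
  hence "measure_pmf.prob (offspring N q) {x. S_tot N x \<le> med N q} = 0"
    by (simp add: measure_pmf_zero_iff Int_commute)
  with med_le[of N q] show False by simp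
qed

lemma markov_pmf:
  fixes g :: "'a \<Rightarrow> real"
  assumes g0: "\<And>x. x \<in> set_pmf p \<Longrightarrow> 0 \<le> g x" and g1: "\<And>x. x \<in> set_pmf p \<Longrightarrow> P x \<Longrightarrow> 1 \<le> g x"
    and int: "integrable (measure_pmf p) g"
  shows "measure_pmf.prob p {x. P x} \<le> measure_pmf.expectation p g"
proof -
  have "measure_pmf.prob p {x. P x} = measure_pmf.expectation p (indicator {x. P x})" by simp
  also have "\<dots> \<le> measure_pmf.expectation p g"
    by (intro integral_mono_AE int integrable_pmf_AE_bound[where B=1])
       (auto simp: AE_measure_pmf_iff indicator_def intro: g0 g1)
  finally show ?thesis .
qed



lemma key_ineq:
  fixes a t u m :: real
  assumes "1 \<le> a" "0 \<le> t" "t \<le> m" "1 \<le> m" "0 \<le> u" "u \<le> a - 1" "u \<le> m" "2 \<le> a + t"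
  shows "u^2 / (9 * m^2) \<le> a * (a - 1) / ((a + t) * (a + t - 1))"
proof -
  have "u * (a + t) = u * (a - 1) + u * (1 + t)" by algebra
  also have "\<dots> \<le> m * (a - 1) + (a - 1) * (1 + t)"
    using assms by (intro add_mono mult_right_mono mult_mono) auto
  also have "\<dots> \<le> m * (a - 1) + (a - 1) * (2 * m)"
    using assms by (intro add_mono mult_left_mono) auto
  finally have "u * (a + t) \<le> (3 * m) * (a - 1)" by (simp add: algebra_simps)
  hence 1: "u / (3 * m) \<le> (a - 1) / (a + t)" using assms by (simp add: field_simps)
  have "(u / (3 * m))^2 \<le> ((a - 1) / (a + t))^2"
    by (rule power_mono[OF 1]) (use assms in auto)
  hence 2: "u^2 / (9 * m^2) \<le> (a - 1)^2 / (a + t)^2" by (simp add: power_divide power_mult_distrib)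
  have "(a - 1) * (a + t - 1) \<le> a * (a + t)" using assms by (simp add: algebra_simps)
  hence 3: "(a - 1)^2 * ((a + t) * (a + t - 1)) \<le> a * (a - 1) * (a + t)^2"
  proof -
    assume h: "(a - 1) * (a + t - 1) \<le> a * (a + t)"
    have "(a - 1) * (a + t - 1) * ((a - 1) * (a + t)) \<le> a * (a + t) * ((a - 1) * (a + t))"
      using assms by (intro mult_right_mono h) auto
    thus ?thesis by (simp add: power2_eq_square algebra_simps)
  qed
  have p1: "(a + t)^2 > 0" "(a + t) * (a + t - 1) > 0" using assms by auto
  have "(a - 1)^2 / (a + t)^2 \<le> a * (a - 1) / ((a + t) * (a + t - 1))"
    using 3 p1 by (simp add: divide_simps)
  with 2 show ?thesis by linarith
qed

lemma ratio_le1: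
  fixes a s :: real assumes "1 \<le> a" "a \<le> s" "2 \<le> s"
  shows "0 \<le> a * (a - 1) / (s * (s - 1))" "a * (a - 1) / (s * (s - 1)) \<le> 1"
proof -
  show "0 \<le> a * (a - 1) / (s * (s - 1))" using assms by simp
  have "a * (a - 1) \<le> s * (s - 1)" using assms by (intro mult_mono) auto
  thus "a * (a - 1) / (s * (s - 1)) \<le> 1" using assms by simp
qed

lemma S_split: "N \<ge> 1 \<Longrightarrow> S_tot N x = x 0 + (\<Sum>k\<in>{1..<N}. x k)"
proof -
  assume N: "N \<ge> 1"
  have "{..<N} = insert 0 {1..<N}" using N by auto
  thus ?thesis by (simp add: S_tot_def)
qed

lemma R1:
  assumes N: "N \<ge> 2" and q: "set_pmf q \<subseteq> {1..}"
  shows "real N * measure_pmf.expectation q (\<lambda>v. (clip (real (med N q)) v)^2)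
           \<le> 18 * cN N q * (real (med N q))^2"
proof -
  define m where "m = real (med N q)"
  define T where "T x = (\<Sum>k\<in>{1..<N}. x k)" for x :: "nat \<Rightarrow> nat"
  define \<psi> where "\<psi> x = (if T x \<le> med N q then 1 else (0::real))" for x
  define \<phi> where "\<phi> v = (clip m v)^2" for v
  define h where "h x = ff2 (x 0) / (real (S_tot N x) * (real (S_tot N x) - 1))" for x
  have "med N q \<ge> N" using med_geN[OF q, of N] N by simp
  hence m1: "m \<ge> 1" using N unfolding m_def by simp
  have c: "cN N q = real N * measure_pmf.expectation (offspring N q) h"
    unfolding h_def by (rule cN_eq[OF N q])
  have hb: "0 \<le> h x \<and> h x \<le> 1" if x: "x \<in> set_pmf (offspring N q)" for x
  proof -
    have x1: "\<forall>k<N. x k \<ge> 1" using off_support[OF x q] by auto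
    have "S_tot N x = x 0 + T x" unfolding T_def using N by (intro S_split) auto
    moreover have "S_tot N x \<ge> N" using S_ge[OF x1] .
    ultimately show ?thesis unfolding h_def ff2_def using ratio_le1[of "real (x 0)" "real (S_tot N x)"] x1 N
      by auto
  qed
  have pw: "\<phi> (x 0) * \<psi> x / (9 * m^2) \<le> h x" if x: "x \<in> set_pmf (offspring N q)" for x
  proof (cases "T x \<le> med N q")
    case False thus ?thesis using hb[OF x] by (simp add: \<psi>_def)
  next
    case True
    have x1: "\<forall>k<N. x k \<ge> 1" using off_support[OF x q] by auto
    have S: "S_tot N x = x 0 + T x" unfolding T_def using N by (intro S_split) auto
    have SN: "S_tot N x \<ge> N" using S_ge[OF x1] .
    have "(clip m (x 0))^2 / (9 * m^2) \<le> real (x 0) * (real (x 0) - 1) / ((real (x 0) + real (T x)) * (real (x 0) + real (T x) - 1))"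
      by (rule key_ineq) (use x1 N m1 True S SN in \<open>auto simp: m_def clip_nonneg clip_le clip_le_Y\<close>)
    thus ?thesis using True S by (simp add: \<phi>_def \<psi>_def h_def ff2_def)
  qed
  have phib: "0 \<le> \<phi> v \<and> \<phi> v \<le> m^2" for v
    unfolding \<phi>_def using m1 by (auto intro!: power_mono clip_le clip_nonneg)
  have phib2: "\<bar>\<phi> (x 0) * \<psi> x / (9 * m^2)\<bar> \<le> 1" for x
  proof -
    have "\<phi> (x 0) * \<psi> x \<le> m^2" "0 \<le> \<phi> (x 0) * \<psi> x" using phib[of "x 0"] by (auto simp: \<psi>_def)
    moreover have "m^2 \<le> 9 * m^2" "m^2 > 0" using m1 by auto
    ultimately show ?thesis by (simp add: abs_le_iff divide_le_eq)
  qed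
  have intph: "integrable (measure_pmf (offspring N q)) (\<lambda>x. \<phi> (x 0) * \<psi> x / (9 * m^2))"
    by (rule integrable_pmf_AE_bound[where B="1"]) (use phib2 in auto)
  have inth: "integrable (measure_pmf (offspring N q)) h"
    by (rule integrable_pmf_AE_bound[where B=1]) (use hb in auto)
  have e0: "measure_pmf.expectation (offspring N q) (\<lambda>x. \<phi> (x 0) * \<psi> x / (9 * m^2))
      \<le> measure_pmf.expectation (offspring N q) h"
    by (intro integral_mono_AE intph inth) (auto simp: AE_measure_pmf_iff intro: pw)
  have e1: "measure_pmf.expectation (offspring N q) (\<lambda>x. \<phi> (x 0) * \<psi> x / (9 * m^2))
      = measure_pmf.expectation (offspring N q) (\<lambda>x. \<phi> (x 0) * \<psi> x) / (9 * m^2)"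
    by simp
  have e2: "measure_pmf.expectation (offspring N q) (\<lambda>x. \<phi> (x 0) * \<psi> x)
      = measure_pmf.expectation q \<phi> * measure_pmf.expectation (offspring N q) \<psi>"
  proof (rule off_split[where B="m^2" and B'=1])
    show "1 \<le> N" using N by simp
  next
    fix x y :: "nat \<Rightarrow> nat" assume "\<And>k. k \<noteq> 0 \<Longrightarrow> x k = y k"
    hence "T x = T y" unfolding T_def by (intro sum.cong) auto
    thus "\<psi> x = \<psi> y" by (simp add: \<psi>_def)
  qed (use phib in \<open>auto simp: \<psi>_def\<close>)
  have e3: "measure_pmf.expectation (offspring N q) \<psi> \<ge> 1/2"
  proof -
    have "1/2 \<le> measure_pmf.prob (offspring N q) {x. S_tot N x \<le> med N q}" by (rule med_le)
    also have "\<dots> = measure_pmf.expectation (offspring N q) (indicator {x. S_tot N x \<le> med N q})" by simp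
    also have "\<dots> \<le> measure_pmf.expectation (offspring N q) \<psi>"
    proof (intro integral_mono_AE integrable_pmf_AE_bound[where B=1])
      show "AE x in measure_pmf (offspring N q). indicat_real {x. S_tot N x \<le> med N q} x \<le> \<psi> x"
      proof (rule AE_pmfI)
        fix x assume x: "x \<in> set_pmf (offspring N q)"
        have "S_tot N x = x 0 + T x" unfolding T_def using N by (intro S_split) auto
        thus "indicat_real {x. S_tot N x \<le> med N q} x \<le> \<psi> x" by (auto simp: \<psi>_def indicator_def)
      qed
    qed (auto simp: \<psi>_def indicator_def)
    finally show ?thesis .
  qed
  have e4: "measure_pmf.expectation q \<phi> \<ge> 0"
    by (intro Bochner_Integration.integral_nonneg) (simp add: \<phi>_def)
  have m2: "9 * m^2 > 0" using m1 by simp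
  have "measure_pmf.expectation q \<phi> * (1/2) \<le> measure_pmf.expectation q \<phi> * measure_pmf.expectation (offspring N q) \<psi>"
    by (rule mult_left_mono[OF e3 e4])
  also have "\<dots> = 9 * m^2 * measure_pmf.expectation (offspring N q) (\<lambda>x. \<phi> (x 0) * \<psi> x / (9 * m^2))"
    unfolding e1 e2 using m2 by simp
  also have "\<dots> \<le> 9 * m^2 * measure_pmf.expectation (offspring N q) h"
    using m2 e0 by (intro mult_left_mono) auto
  finally have "measure_pmf.expectation q \<phi> \<le> 18 * m^2 * measure_pmf.expectation (offspring N q) h" by simp
  hence "real N * measure_pmf.expectation q \<phi> \<le> real N * (18 * m^2 * measure_pmf.expectation (offspring N q) h)"
    by (intro mult_left_mono) auto
  hence "real N * measure_pmf.expectation q \<phi> \<le> 18 * m^2 * (real N * measure_pmf.expectation (offspring N q) h)"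
    by (simp only: mult_ac)
  also have "18 * m^2 * (real N * measure_pmf.expectation (offspring N q) h) = 18 * cN N q * m^2"
    unfolding c by (simp only: mult_ac)
  finally have fin: "real N * measure_pmf.expectation q \<phi> \<le> 18 * cN N q * m^2" .
  have eq: "\<phi> = (\<lambda>v. (clip (real (med N q)) v)^2)"
    by (rule ext) (simp only: \<phi>_def m_def)
  show ?thesis using fin by (simp only: eq m_def)
qed



lemma off_sum_exp:
  fixes g :: "nat \<Rightarrow> real"
  assumes gb: "\<And>v. \<bar>g v\<bar> \<le> B"
  shows "measure_pmf.expectation (offspring N q) (\<lambda>x. \<Sum>k<N. g (x k)) = real N * measure_pmf.expectation q g"
proof -
  have "measure_pmf.expectation (offspring N q) (\<lambda>x. \<Sum>k<N. g (x k)) = (\<Sum>k<N. measure_pmf.expectation (offspring N q) (\<lambda>x. g (x k)))"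
    by (rule Bochner_Integration.integral_sum[where f="\<lambda>k x. g (x k)"]) (rule integrable_pmf_AE_bound[where B=B], use gb in auto)
  also have "\<dots> = (\<Sum>k<N. measure_pmf.expectation q g)"
    by (intro sum.cong refl off_component) auto
  finally show ?thesis by simp
qed

lemma sum_if_diag:
  fixes A B :: real
  shows "(\<Sum>j<N. \<Sum>k<N. if j = k then A else B) = real N * A + real N * (real N - 1) * B"
proof -
  have "(\<Sum>k<N. if j = k then A else B) = real N * B + (A - B)" if "j < N" for j
  proof -
    have "(\<Sum>k<N. if j = k then A else B) = (\<Sum>k<N. B + (if j = k then A - B else 0))"
      by (intro sum.cong) auto
    also have "\<dots> = real N * B + (A - B)" using that by (simp add: sum.distrib)
    finally show ?thesis .
  qed
  hence "(\<Sum>j<N. \<Sum>k<N. if j = k then A else B) = (\<Sum>j<N. real N * B + (A - B))" by (intro sum.cong) auto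
  also have "\<dots> = real N * A + real N * (real N - 1) * B" by (simp add: algebra_simps)
  finally show ?thesis .
qed

lemma off_sq_exp:
  fixes g :: "nat \<Rightarrow> real"
  assumes g0: "\<And>v. 0 \<le> g v" and gB: "\<And>v. g v \<le> B"
  shows "measure_pmf.expectation (offspring N q) (\<lambda>x. (\<Sum>k<N. g (x k))^2)
     = real N * measure_pmf.expectation q (\<lambda>v. (g v)^2) + real N * (real N - 1) * (measure_pmf.expectation q g)^2"
proof -
  have gb: "\<bar>g v\<bar> \<le> B" for v using g0 gB by (metis abs_of_nonneg)
  have B0: "0 \<le> B" using g0[of 0] gB[of 0] by linarith
  have "(\<lambda>x. (\<Sum>k<N. g (x k))^2) = (\<lambda>x. \<Sum>j<N. \<Sum>k<N. g (x j) * g (x k))"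
    by (simp add: fun_eq_iff power2_eq_square sum_product)
  have "measure_pmf.expectation (offspring N q) (\<lambda>x. (\<Sum>k<N. g (x k))^2)
      = (\<Sum>j<N. \<Sum>k<N. measure_pmf.expectation (offspring N q) (\<lambda>x. g (x j) * g (x k)))"
  proof -
    have ib: "integrable (measure_pmf (offspring N q)) (\<lambda>x. g (x j) * g (x k))" for j k
      by (rule integrable_pmf_AE_bound[where B="B*B"]) (auto simp: abs_mult intro!: mult_mono gb B0)
    have "measure_pmf.expectation (offspring N q) (\<lambda>x. \<Sum>j<N. \<Sum>k<N. g (x j) * g (x k))
        = (\<Sum>j<N. measure_pmf.expectation (offspring N q) (\<lambda>x. \<Sum>k<N. g (x j) * g (x k)))"
      by (rule Bochner_Integration.integral_sum[where f="\<lambda>j x. \<Sum>k<N. g (x j) * g (x k)"]) (auto intro!: Bochner_Integration.integrable_sum ib)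
    also have "\<dots> = (\<Sum>j<N. \<Sum>k<N. measure_pmf.expectation (offspring N q) (\<lambda>x. g (x j) * g (x k)))"
      by (intro sum.cong refl Bochner_Integration.integral_sum[where f="\<lambda>k x. g (x j) * g (x k)" for j] ib)
    finally show ?thesis using \<open>(\<lambda>x. (\<Sum>k<N. g (x k))^2) = _\<close> by simp
  qed
  also have "\<dots> = (\<Sum>j<N. \<Sum>k<N. if j = k then measure_pmf.expectation q (\<lambda>v. (g v)^2) else (measure_pmf.expectation q g)^2)"
  proof (intro sum.cong refl)
    fix j k assume "j \<in> {..<N}" "k \<in> {..<N}"
    thus "measure_pmf.expectation (offspring N q) (\<lambda>x. g (x j) * g (x k)) =
        (if j = k then measure_pmf.expectation q (\<lambda>v. (g v)^2) else (measure_pmf.expectation q g)^2)"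
      using off_component[where k=j and N=N and g="\<lambda>v. (g v)^2" and q=q] off_pair[where j=j and N=N and k=k and g=g and B=B and q=q] g0 gB
      by (auto simp: power2_eq_square)
  qed
  also have "\<dots> = real N * measure_pmf.expectation q (\<lambda>v. (g v)^2) + real N * (real N - 1) * (measure_pmf.expectation q g)^2"
    by (rule sum_if_diag)
  finally show ?thesis .
qed



lemma cheb_off:
  fixes g :: "nat \<Rightarrow> real"
  assumes g0: "\<And>v. 0 \<le> g v" and gB: "\<And>v. g v \<le> B" and t: "t > 0"
  shows "measure_pmf.prob (offspring N q) {x. t \<le> \<bar>(\<Sum>k<N. g (x k)) - real N * measure_pmf.expectation q g\<bar>}
     \<le> real N * measure_pmf.expectation q (\<lambda>v. (g v)^2) / t^2"
proof -
  define S where "S x = (\<Sum>k<N. g (x k))" for x :: "nat \<Rightarrow> nat"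
  define \<mu> where "\<mu> = real N * measure_pmf.expectation q g"
  have gb: "\<bar>g v\<bar> \<le> B" for v using g0 gB by (metis abs_of_nonneg)
  have B0: "0 \<le> B" using g0[of 0] gB[of 0] by linarith
  have Sb: "\<bar>S x\<bar> \<le> real N * B" for x
  proof -
    have "\<bar>S x\<bar> \<le> (\<Sum>k<N. \<bar>g (x k)\<bar>)" unfolding S_def by (rule sum_abs)
    also have "\<dots> \<le> (\<Sum>k<N. B)" by (intro sum_mono gb)
    finally show ?thesis by simp
  qed
  have iS: "integrable (measure_pmf (offspring N q)) S"
    by (rule integrable_pmf_AE_bound[where B="real N * B"], rule Sb)
  have iS2: "integrable (measure_pmf (offspring N q)) (\<lambda>x. (S x)^2)"
  proof (rule integrable_pmf_AE_bound[where B="(real N * B)^2"])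
    fix x show "\<bar>(S x)^2\<bar> \<le> (real N * B)^2"
    proof -
      have "\<bar>S x\<bar>^2 \<le> (real N * B)^2" by (rule power_mono[OF Sb]) simp
      thus ?thesis by simp
    qed
  qed
  have ES: "measure_pmf.expectation (offspring N q) S = \<mu>"
    unfolding S_def \<mu>_def by (rule off_sum_exp[where B=B]) (rule gb)
  have ES2: "measure_pmf.expectation (offspring N q) (\<lambda>x. (S x)^2)
     = real N * measure_pmf.expectation q (\<lambda>v. (g v)^2) + real N * (real N - 1) * (measure_pmf.expectation q g)^2"
    unfolding S_def by (rule off_sq_exp[where B=B]) (use g0 gB in auto)
  have "(\<lambda>x. (S x - \<mu>)^2) = (\<lambda>x. (S x)^2 + ((-2 * \<mu>) * S x + \<mu>^2))"
    by (simp add: fun_eq_iff power2_eq_square algebra_simps)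
  hence "measure_pmf.expectation (offspring N q) (\<lambda>x. (S x - \<mu>)^2)
      = measure_pmf.expectation (offspring N q) (\<lambda>x. (S x)^2) + ((-2 * \<mu>) * measure_pmf.expectation (offspring N q) S + \<mu>^2)"
    using iS iS2 by simp
  also have "\<dots> = real N * measure_pmf.expectation q (\<lambda>v. (g v)^2) - real N * (measure_pmf.expectation q g)^2"
    unfolding ES ES2 \<mu>_def by (simp add: power2_eq_square algebra_simps)
  also have "\<dots> \<le> real N * measure_pmf.expectation q (\<lambda>v. (g v)^2)" by simp
  finally have V: "measure_pmf.expectation (offspring N q) (\<lambda>x. (S x - \<mu>)^2) \<le> real N * measure_pmf.expectation q (\<lambda>v. (g v)^2)" .
  have "measure_pmf.prob (offspring N q) {x. t \<le> \<bar>S x - \<mu>\<bar>} \<le> measure_pmf.expectation (offspring N q) (\<lambda>x. (S x - \<mu>)^2 / t^2)"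
  proof (rule markov_pmf)
    fix x assume "t \<le> \<bar>S x - \<mu>\<bar>"
    hence "t^2 \<le> (S x - \<mu>)^2" using t by (metis abs_le_square_iff abs_of_pos less_imp_le power2_abs)
    thus "1 \<le> (S x - \<mu>)^2 / t^2" using t by simp
  next
    show "integrable (measure_pmf (offspring N q)) (\<lambda>x. (S x - \<mu>)^2 / t^2)"
      using iS iS2 by (simp add: power2_diff)
  qed simp
  also have "\<dots> = measure_pmf.expectation (offspring N q) (\<lambda>x. (S x - \<mu>)^2) / t^2" by simp
  also have "\<dots> \<le> real N * measure_pmf.expectation q (\<lambda>v. (g v)^2) / t^2"
    using V t by (simp add: divide_right_mono)
  finally show ?thesis unfolding S_def \<mu>_def .
qed

lemma chernoff_off:
  fixes g :: "nat \<Rightarrow> real"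
  assumes g0: "\<And>v. 0 \<le> g v" and gB: "\<And>v. g v \<le> B" and l: "l \<ge> 0"
  shows "measure_pmf.prob (offspring N q) {x. (\<Sum>k<N. g (x k)) < b}
     \<le> exp (l * b - l * real N * measure_pmf.expectation q g + l^2 * real N * measure_pmf.expectation q (\<lambda>v. (g v)^2) / 2)"
proof -
  define S where "S x = (\<Sum>k<N. g (x k))" for x :: "nat \<Rightarrow> nat"
  define E1 where "E1 = measure_pmf.expectation q g"
  define E2 where "E2 = measure_pmf.expectation q (\<lambda>v. (g v)^2)"
  have gb: "\<bar>g v\<bar> \<le> B" for v using g0 gB by (metis abs_of_nonneg)
  have S0: "0 \<le> S x" for x unfolding S_def by (intro sum_nonneg g0)
  have ig: "integrable (measure_pmf q) g" by (rule pmf_integrable_bounded[OF gb])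
  have ig2: "integrable (measure_pmf q) (\<lambda>v. (g v)^2)"
  proof (rule pmf_integrable_bounded[where B="B^2"])
    fix v
    have "\<bar>g v\<bar>^2 \<le> B^2" by (rule power_mono[OF gb]) simp
    thus "\<bar>(g v)^2\<bar> \<le> B^2" by simp
  qed
  have iexp: "integrable (measure_pmf q) (\<lambda>v. exp (- l * g v))"
    by (rule pmf_integrable_bounded[where B=1]) (use g0 l in auto)
  have "measure_pmf.prob (offspring N q) {x. S x < b}
      \<le> measure_pmf.expectation (offspring N q) (\<lambda>x. exp (l * b) * exp (- l * S x))"
  proof (rule markov_pmf)
    fix x assume sb: "S x < b"
    have "l * S x \<le> l * b" by (rule mult_left_mono) (use sb l in auto)
    hence "0 \<le> l * b + - l * S x" by simp
    hence "1 \<le> exp (l * b + - l * S x)" by (simp del: mult_minus_left)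
    also have "exp (l * b + - l * S x) = exp (l * b) * exp (- l * S x)" by (rule exp_add)
    finally show "1 \<le> exp (l * b) * exp (- l * S x)" .
  next
    show "integrable (measure_pmf (offspring N q)) (\<lambda>x. exp (l * b) * exp (- l * S x))"
      by (rule integrable_pmf_AE_bound[where B="exp (l * b)"]) (use S0 l in auto)
  qed simp
  also have "\<dots> = exp (l * b) * (measure_pmf.expectation q (\<lambda>v. exp (- l * g v)))^N"
    unfolding S_def using off_exp[OF g0 l, of N q] by simp
  also have "\<dots> \<le> exp (l * b) * (exp (- l * E1 + l^2 * E2 / 2))^N"
  proof (intro mult_left_mono power_mono)
    have "measure_pmf.expectation q (\<lambda>v. exp (- l * g v)) \<le> measure_pmf.expectation q (\<lambda>v. 1 - l * g v + (l * g v)^2 / 2)"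
    proof (intro integral_mono iexp)
      have eq: "(\<lambda>v. 1 - l * g v + (l * g v)^2 / 2) = (\<lambda>v. 1 + ((- l) * g v + (l^2 / 2) * (g v)^2))"
        by (simp add: fun_eq_iff power_mult_distrib)
      show "integrable (measure_pmf q) (\<lambda>v. 1 - l * g v + (l * g v)^2 / 2)"
        unfolding eq by (intro Bochner_Integration.integrable_add integrable_mult_right ig ig2 measure_pmf.integrable_const)
      fix v show "exp (- l * g v) \<le> 1 - l * g v + (l * g v)^2 / 2"
        using exp_neg_le[of "l * g v"] g0[of v] l by simp
    qed
    also have "\<dots> = 1 - l * E1 + l^2 * E2 / 2"
      using ig ig2 by (simp add: E1_def E2_def power_mult_distrib)
    also have "\<dots> \<le> exp (- l * E1 + l^2 * E2 / 2)" using exp_ge_add_one_self[of "- l * E1 + l^2 * E2 / 2"] by linarith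
    finally show "measure_pmf.expectation q (\<lambda>v. exp (- l * g v)) \<le> exp (- l * E1 + l^2 * E2 / 2)" .
    show "0 \<le> measure_pmf.expectation q (\<lambda>v. exp (- l * g v))" by (intro Bochner_Integration.integral_nonneg) simp
  qed simp
  also have "\<dots> = exp (l * b - l * real N * E1 + l^2 * real N * E2 / 2)"
  proof -
    have "(exp (- l * E1 + l^2 * E2 / 2))^N = exp (real N * (- l * E1 + l^2 * E2 / 2))"
      by (rule exp_of_nat_mult[symmetric])
    hence "exp (l * b) * (exp (- l * E1 + l^2 * E2 / 2))^N = exp (l * b + real N * (- l * E1 + l^2 * E2 / 2))"
      by (simp only: exp_add)
    also have "l * b + real N * (- l * E1 + l^2 * E2 / 2) = l * b - l * real N * E1 + l^2 * real N * E2 / 2"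
      by (simp add: algebra_simps)
    finally show ?thesis .
  qed
  finally show ?thesis unfolding S_def E1_def E2_def .
qed



lemma prob_le_union:
  assumes "\<And>x. x \<in> set_pmf p \<Longrightarrow> x \<in> A \<Longrightarrow> x \<in> B \<or> x \<in> C"
  shows "measure_pmf.prob p A \<le> measure_pmf.prob p B + measure_pmf.prob p C"
proof -
  have "measure_pmf.prob p A = measure_pmf.prob p (A \<inter> set_pmf p)" by (simp add: measure_Int_set_pmf)
  also have "\<dots> \<le> measure_pmf.prob p (B \<union> C)"
    by (rule measure_pmf.finite_measure_mono) (use assms in auto)
  also have "\<dots> \<le> measure_pmf.prob p B + measure_pmf.prob p C"
    by (rule measure_Un_le) auto
  finally show ?thesis .
qed

lemma cN_nonneg:
  assumes N: "N \<ge> 2" and q: "set_pmf q \<subseteq> {1..}"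
  shows "0 \<le> cN N q"
proof -
  have "0 \<le> measure_pmf.expectation (offspring N q) (\<lambda>x. ff2 (x 0) / (real (S_tot N x) * (real (S_tot N x) - 1)))"
  proof (intro Bochner_Integration.integral_nonneg divide_nonneg_nonneg ff2_nonneg)
    fix x show "0 \<le> real (S_tot N x) * (real (S_tot N x) - 1)"
      by (cases "S_tot N x") auto
  qed
  thus ?thesis using cN_eq[OF N q] by simp
qed

context
  fixes N :: nat and q :: "nat pmf"
  assumes N: "N \<ge> 2" and q: "set_pmf q \<subseteq> {1..}"
begin

definition "mm = real (med N q)"
definition "cc = cN N q"
definition "EU2 = measure_pmf.expectation q (\<lambda>v. (clip mm v)^2)"
definition "mu = real N * measure_pmf.expectation q (clip mm)"

lemma mm_ge: "mm \<ge> real N" using med_geN[OF q, of N] N by (simp add: mm_def)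
lemma mm_pos: "mm > 0" using mm_ge N by simp
lemma cc_nonneg: "cc \<ge> 0" unfolding cc_def by (rule cN_nonneg[OF N q])
lemma EU2_bound: "real N * EU2 \<le> 18 * cc * mm^2"
  unfolding EU2_def cc_def mm_def by (rule R1[OF N q])

lemma clip_sq_bound: "(clip mm v)^2 \<le> mm^2"
  using mm_pos by (intro power_mono clip_le clip_nonneg) auto

lemma clipm_le: "clip mm v \<le> mm" by (rule clip_le) (use mm_pos in simp)
lemma clip8_le: "clip (mm/8) v \<le> mm/8" by (rule clip_le) (use mm_pos in simp)
lemma clip8_le': "clip (mm/8) v \<le> mm" using clip8_le[of v] mm_pos by linarith
lemma clip8_sq: "(clip (mm/8) v)^2 \<le> mm^2" by (rule power_mono[OF clip8_le' clip_nonneg])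

lemma bad1_bound:
  "measure_pmf.prob (offspring N q) {x. \<exists>k<N. real (x k) - 1 > mm} \<le> 18 * cc"
proof -
  have "measure_pmf.prob (offspring N q) {x. \<exists>k<N. real (x k) - 1 > mm}
     \<le> measure_pmf.expectation (offspring N q) (\<lambda>x. \<Sum>k<N. (clip mm (x k))^2 / mm^2)"
  proof (rule markov_pmf)
    fix x assume "\<exists>k<N. real (x k) - 1 > mm"
    then obtain k where k: "k < N" "real (x k) - 1 > mm" by auto
    have "1 = (clip mm (x k))^2 / mm^2" using k mm_pos by (simp add: clip_def)
    also have "\<dots> \<le> (\<Sum>k<N. (clip mm (x k))^2 / mm^2)"
      using k by (intro member_le_sum) auto
    finally show "1 \<le> (\<Sum>k<N. (clip mm (x k))^2 / mm^2)" .
  next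
    show "integrable (measure_pmf (offspring N q)) (\<lambda>x. \<Sum>k<N. (clip mm (x k))^2 / mm^2)"
      by (intro Bochner_Integration.integrable_sum integrable_pmf_AE_bound[where B=1])
         (use clip_sq_bound mm_pos in \<open>auto simp: divide_le_eq\<close>)
  qed (auto intro!: sum_nonneg)
  also have "\<dots> = real N * measure_pmf.expectation q (\<lambda>v. (clip mm v)^2 / mm^2)"
    by (rule off_sum_exp[where B=1]) (use clip_sq_bound mm_pos in \<open>auto simp: divide_le_eq\<close>)
  also have "\<dots> = real N * (EU2 / mm^2)" unfolding EU2_def by simp
  also have "\<dots> \<le> 18 * cc" using EU2_bound mm_pos by (simp add: field_simps)
  finally show ?thesis .
qed

lemma cheb_bound:
  assumes e: "e > 0"
  shows "measure_pmf.prob (offspring N q) {x. e * mm \<le> \<bar>(\<Sum>k<N. clip mm (x k)) - mu\<bar>} \<le> 18 * cc / e^2"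
proof -
  have "measure_pmf.prob (offspring N q) {x. e * mm \<le> \<bar>(\<Sum>k<N. clip mm (x k)) - mu\<bar>}
      \<le> real N * EU2 / (e * mm)^2"
    unfolding mu_def EU2_def by (rule cheb_off[where B=mm]) (use e mm_pos in \<open>auto intro: clip_nonneg clip_le\<close>)
  also have "\<dots> \<le> 18 * cc * mm^2 / (e * mm)^2"
    using EU2_bound e mm_pos by (intro divide_right_mono) auto
  also have "\<dots> = 18 * cc / e^2" using mm_pos by (simp add: power_mult_distrib)
  finally show ?thesis .
qed

lemma S_good:
  assumes x: "x \<in> set_pmf (offspring N q)" and g: "\<not> (\<exists>k<N. real (x k) - 1 > mm)"
  shows "real (S_tot N x) = real N + (\<Sum>k<N. clip mm (x k))"
proof -
  have "real (x k) = 1 + clip mm (x k)" if "k < N" for k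
    using off_support(1)[OF x q] g that by (auto simp: clip_def)
  hence "real (S_tot N x) = (\<Sum>k<N. 1 + clip mm (x k))" by (simp add: S_tot_def)
  thus ?thesis by (simp add: sum.distrib)
qed


lemma location:
  assumes e: "e > 0" and small: "18 * cc + 18 * cc / e^2 < 1/2"
  shows "\<bar>real N + mu - mm\<bar> \<le> e * mm"
proof (rule ccontr)
  assume "\<not> ?thesis"
  hence "real N + mu - mm > e * mm \<or> mm - (real N + mu) > e * mm" by linarith
  thus False
  proof
    assume a: "real N + mu - mm > e * mm"
    have "measure_pmf.prob (offspring N q) {x. S_tot N x \<le> med N q}
        \<le> measure_pmf.prob (offspring N q) {x. \<exists>k<N. real (x k) - 1 > mm}
         + measure_pmf.prob (offspring N q) {x. e * mm \<le> \<bar>(\<Sum>k<N. clip mm (x k)) - mu\<bar>}"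
    proof (rule prob_le_union)
      fix x assume x: "x \<in> set_pmf (offspring N q)" "x \<in> {x. S_tot N x \<le> med N q}"
      show "x \<in> {x. \<exists>k<N. real (x k) - 1 > mm} \<or> x \<in> {x. e * mm \<le> \<bar>(\<Sum>k<N. clip mm (x k)) - mu\<bar>}"
      proof (cases "\<exists>k<N. real (x k) - 1 > mm")
        case False
        have "real (S_tot N x) \<le> mm" using x by (simp add: mm_def)
        with S_good[OF x(1) False] a show ?thesis by auto
      qed auto
    qed
    also have "\<dots> \<le> 18 * cc + 18 * cc / e^2" by (intro add_mono bad1_bound cheb_bound e)
    finally show False using med_le[of N q] small by linarith
  next
    assume a: "mm - (real N + mu) > e * mm"
    have "measure_pmf.prob (offspring N q) {x. med N q \<le> S_tot N x}
        \<le> measure_pmf.prob (offspring N q) {x. \<exists>k<N. real (x k) - 1 > mm}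
         + measure_pmf.prob (offspring N q) {x. e * mm \<le> \<bar>(\<Sum>k<N. clip mm (x k)) - mu\<bar>}"
    proof (rule prob_le_union)
      fix x assume x: "x \<in> set_pmf (offspring N q)" "x \<in> {x. med N q \<le> S_tot N x}"
      show "x \<in> {x. \<exists>k<N. real (x k) - 1 > mm} \<or> x \<in> {x. e * mm \<le> \<bar>(\<Sum>k<N. clip mm (x k)) - mu\<bar>}"
      proof (cases "\<exists>k<N. real (x k) - 1 > mm")
        case False
        have "real (S_tot N x) \<ge> mm" using x by (simp add: mm_def)
        with S_good[OF x(1) False] a show ?thesis by auto
      qed auto
    qed
    also have "\<dots> \<le> 18 * cc + 18 * cc / e^2" by (intro add_mono bad1_bound cheb_bound e)
    finally show False using med_ge[of N q] small by linarith
  qed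
qed

lemma part1_bound:
  assumes e: "e > 0" and small: "18 * cc + 18 * cc / e^2 < 1/2"
  shows "measure_pmf.prob (offspring N q) {x. \<bar>real (S_tot N x) / mm - 1\<bar> > 2 * e} \<le> 18 * cc + 18 * cc / e^2"
proof -
  have loc: "\<bar>real N + mu - mm\<bar> \<le> e * mm" by (rule location[OF e small])
  have "measure_pmf.prob (offspring N q) {x. \<bar>real (S_tot N x) / mm - 1\<bar> > 2 * e}
        \<le> measure_pmf.prob (offspring N q) {x. \<exists>k<N. real (x k) - 1 > mm}
         + measure_pmf.prob (offspring N q) {x. e * mm \<le> \<bar>(\<Sum>k<N. clip mm (x k)) - mu\<bar>}"
  proof (rule prob_le_union)
    fix x assume x: "x \<in> set_pmf (offspring N q)" "x \<in> {x. \<bar>real (S_tot N x) / mm - 1\<bar> > 2 * e}"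
    show "x \<in> {x. \<exists>k<N. real (x k) - 1 > mm} \<or> x \<in> {x. e * mm \<le> \<bar>(\<Sum>k<N. clip mm (x k)) - mu\<bar>}"
    proof (cases "\<exists>k<N. real (x k) - 1 > mm")
      case False
      have "\<bar>real (S_tot N x) / mm - 1\<bar> = \<bar>real (S_tot N x) - mm\<bar> / mm"
        using mm_pos by (simp add: abs_div_pos diff_divide_distrib)
      hence "\<bar>real (S_tot N x) - mm\<bar> > 2 * e * mm" using x(2) mm_pos by (simp add: less_divide_eq)
      with S_good[OF x(1) False] loc show ?thesis by auto
    qed auto
  qed
  also have "\<dots> \<le> 18 * cc + 18 * cc / e^2" by (intro add_mono bad1_bound cheb_bound e)
  finally show ?thesis .
qed


lemma clip_mono_t: "t \<le> t' \<Longrightarrow> clip t v \<le> clip t' v"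
  by (simp add: clip_def)

lemma clip_lower: assumes m: "m > 0" shows "clip m v - 8 * (clip m v)^2 / m \<le> clip (m/8) v"
proof (cases "real v - 1 \<le> m/8")
  case True
  hence "clip (m/8) v = clip m v" using m by (simp add: clip_def)
  moreover have "0 \<le> 8 * (clip m v)^2 / m" using m by simp
  ultimately show ?thesis by linarith
next
  case False
  hence w: "clip (m/8) v = m/8" using m by (simp add: clip_def)
  have u: "clip m v > m/8" using False m by (simp add: clip_def)
  have "8 * (clip m v)^2 / m = clip m v * (8 * clip m v / m)" by (simp add: power2_eq_square)
  also have "\<dots> \<ge> clip m v * 1" using u m by (intro mult_left_mono) (auto simp: field_simps)
  finally show ?thesis using w m by simp
qed

lemma event_sub:
  assumes x: "x \<in> set_pmf (offspring N q)" and ev: "real (S_tot N x) - real (Max_off N x) < 1/8 * mm"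
  shows "(\<Sum>k<N. clip (mm/8) (x k)) < mm/4 - real N + 1"
proof -
  have x1: "\<forall>k<N. x k \<ge> 1" using off_support(1)[OF x q] .
  have "(0::nat) \<in> {..<N}" using N by simp
  hence ne: "{..<N} \<noteq> {}" by blast
  have "Max_off N x \<in> x ` {..<N}" unfolding Max_off_def by (rule Max_in) (use ne in auto)
  then obtain j where j: "j < N" "Max_off N x = x j" by auto
  have fin: "finite {..<N}" by simp
  have W1: "1 + clip (mm/8) (x k) \<le> real (x k)" if "k < N" for k
    using clip_le_Y[of "x k" "mm/8"] x1 that by auto
  have "real (S_tot N x) = real (x j) + (\<Sum>k\<in>{..<N} - {j}. real (x k))"
    unfolding S_tot_def using j by (simp add: sum.remove[OF fin, of j])
  moreover have "(\<Sum>k\<in>{..<N} - {j}. real (x k)) \<ge> (\<Sum>k\<in>{..<N} - {j}. 1 + clip (mm/8) (x k))"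
    by (intro sum_mono W1) auto
  moreover have "(\<Sum>k\<in>{..<N} - {j}. 1 + clip (mm/8) (x k)) = (real N - 1) + (\<Sum>k\<in>{..<N} - {j}. clip (mm/8) (x k))"
    using j by (simp add: sum.distrib of_nat_diff)
  moreover have "(\<Sum>k<N. clip (mm/8) (x k)) = clip (mm/8) (x j) + (\<Sum>k\<in>{..<N} - {j}. clip (mm/8) (x k))"
    using j by (simp add: sum.remove[OF fin, of j])
  moreover have "clip (mm/8) (x j) \<le> mm/8" using mm_pos by (intro clip_le) auto
  ultimately show ?thesis using ev j by linarith
qed

lemma part2_bound:
  assumes N4: "N \<ge> 4" and c0: "cc > 0" and small: "18 * cc + 18 * cc / (1/8)^2 < 1/2" and small2: "144 * cc \<le> 1/8"
  shows "measure_pmf.prob (offspring N q) {x. real (S_tot N x) - real (Max_off N x) < 1/8 * mm} \<le> exp (- 1 / (576 * cc))"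
proof -
  define l where "l = 1 / (72 * cc * mm)"
  define b where "b = mm/4 - real N + 1"
  define EW where "EW = measure_pmf.expectation q (clip (mm/8))"
  define EW2 where "EW2 = measure_pmf.expectation q (\<lambda>v. (clip (mm/8) v)^2)"
  have m4: "mm \<ge> 4" using mm_ge N4 by linarith
  have l0: "l \<ge> 0" using c0 mm_pos by (simp add: l_def)
  have "measure_pmf.prob (offspring N q) {x. real (S_tot N x) - real (Max_off N x) < 1/8 * mm}
      \<le> measure_pmf.prob (offspring N q) {x. (\<Sum>k<N. clip (mm/8) (x k)) < b}
         + measure_pmf.prob (offspring N q) {}"
    by (rule prob_le_union) (use event_sub in \<open>auto simp: b_def\<close>)
  also have "\<dots> = measure_pmf.prob (offspring N q) {x. (\<Sum>k<N. clip (mm/8) (x k)) < b}" by simp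
  also have "\<dots> \<le> exp (l * b - l * real N * EW + l^2 * real N * EW2 / 2)"
    unfolding EW_def EW2_def
  proof (rule chernoff_off[where B="mm/8"])
    fix v show "0 \<le> clip (mm/8) v" by (rule clip_nonneg)
    show "clip (mm/8) v \<le> mm/8" by (rule clip_le) (use mm_pos in simp)
  qed (rule l0)
  also have "\<dots> \<le> exp (- 1 / (576 * cc))"
  proof -
    have iU: "integrable (measure_pmf q) (clip mm)"
      by (rule pmf_integrable_bounded[where B=mm]) (simp add: clipm_le clip_nonneg)
    have iU2: "integrable (measure_pmf q) (\<lambda>v. (clip mm v)^2)"
      by (rule pmf_integrable_bounded[where B="mm^2"]) (use clip_sq_bound in auto)
    have iW: "integrable (measure_pmf q) (clip (mm/8))"
      by (rule pmf_integrable_bounded[where B=mm]) (simp add: clip8_le' clip_nonneg)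
    have iW2: "integrable (measure_pmf q) (\<lambda>v. (clip (mm/8) v)^2)"
      by (rule pmf_integrable_bounded[where B="mm^2"]) (simp add: clip8_sq)
    have "measure_pmf.expectation q (\<lambda>v. clip mm v - 8 * (clip mm v)^2 / mm) \<le> EW"
      unfolding EW_def
      by (intro integral_mono iW clip_lower mm_pos Bochner_Integration.integrable_diff iU
          Bochner_Integration.integrable_divide integrable_mult_right iU2)
    moreover have "measure_pmf.expectation q (\<lambda>v. clip mm v - 8 * (clip mm v)^2 / mm)
        = measure_pmf.expectation q (clip mm) - measure_pmf.expectation q (\<lambda>v. 8 * (clip mm v)^2 / mm)"
      by (rule Bochner_Integration.integral_diff[OF iU])
         (intro Bochner_Integration.integrable_divide integrable_mult_right iU2)
    moreover have "measure_pmf.expectation q (\<lambda>v. 8 * (clip mm v)^2 / mm) = 8 * EU2 / mm"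
      unfolding EU2_def by (simp only: integral_divide_zero integral_mult_right_zero)
    ultimately have "measure_pmf.expectation q (clip mm) - 8 * EU2 / mm \<le> EW" by linarith
    hence "real N * (measure_pmf.expectation q (clip mm) - 8 * EU2 / mm) \<le> real N * EW"
      by (intro mult_left_mono) auto
    hence "real N * measure_pmf.expectation q (clip mm) - 8 * (real N * EU2) / mm \<le> real N * EW"
      by (simp add: right_diff_distrib mult_ac)
    hence NEW: "mu - 144 * cc * mm \<le> real N * EW"
    proof -
      assume h: "real N * measure_pmf.expectation q (clip mm) - 8 * (real N * EU2) / mm \<le> real N * EW"
      have "8 * (real N * EU2) / mm \<le> 8 * (18 * cc * mm^2) / mm"
        using EU2_bound mm_pos by (intro divide_right_mono) auto
      also have "\<dots> = 144 * cc * mm" using mm_pos by (simp add: power2_eq_square)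
      finally show ?thesis using h unfolding mu_def by linarith
    qed
    have "EW2 \<le> EU2"
      unfolding EW2_def EU2_def
      by (intro integral_mono iW2 iU2 power_mono clip_mono_t clip_nonneg) (use mm_pos in auto)
    hence NEW2: "real N * EW2 \<le> 18 * cc * mm^2" using EU2_bound by (meson mult_left_mono of_nat_0_le_iff order_trans)
    have loc: "\<bar>real N + mu - mm\<bar> \<le> 1/8 * mm" by (rule location) (use small in auto)
    have bd: "b - real N * EW \<le> - mm / 4"
    proof -
      have "144 * cc * mm \<le> mm / 8" using small2 mm_pos by (simp add: mult_right_mono[of _ _ mm, simplified])
      moreover have "mm - (real N + mu) \<le> 1/8 * mm" using loc by (simp only: abs_le_iff) linarith
      moreover have "b = mm/4 - real N + 1" by (simp add: b_def)
      ultimately show ?thesis using NEW m4 by linarith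
    qed
    have "l * b - l * real N * EW + l^2 * real N * EW2 / 2 = l * (b - real N * EW) + l^2 * (real N * EW2) / 2"
      by (simp add: algebra_simps)
    also have "\<dots> \<le> l * (- mm / 4) + l^2 * (18 * cc * mm^2) / 2"
      using bd NEW2 l0 by (intro add_mono mult_left_mono divide_right_mono) auto
    also have "\<dots> = - 1 / (576 * cc)"
      using c0 mm_pos unfolding l_def by (simp add: field_simps power2_eq_square)
    finally show ?thesis by simp
  qed
  finally show ?thesis .
qed

end




lemma exp_small: fixes K y :: real assumes K: "K > 0" and y: "y > 0"
  shows "exp (- 1 / (K * y)) / y \<le> 4 * K^2 * y"
proof -
  define t where "t = 1 / (K * y)"
  have t0: "t > 0" using K y by (simp add: t_def)
  have "exp (t/2) \<ge> t/2" using exp_ge_add_one_self[of "t/2"] by linarith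
  hence "(t/2)^2 \<le> (exp (t/2))^2" by (rule power_mono) (use t0 in simp)
  also have "(exp (t/2))^2 = exp t" by (simp add: power2_eq_square flip: exp_add)
  finally have "t^2 / 4 \<le> exp t" by (simp add: power_divide)
  hence "exp (- t) \<le> 4 / t^2" using t0 by (simp add: exp_minus field_simps)
  also have "4 / t^2 = 4 * K^2 * y^2" using K y by (simp add: t_def power_divide field_simps)
  finally have "exp (- t) / y \<le> 4 * K^2 * y^2 / y" using y by (intro divide_right_mono) auto
  also have "\<dots> = 4 * K^2 * y" using y by (simp add: power2_eq_square)
  finally show ?thesis by (simp add: t_def)
qed

theorem lemma2p3:
  fixes q :: "nat \<Rightarrow> nat pmf"
  assumes pos: "\<And>N. N \<ge> 1 \<Longrightarrow> set_pmf (q N) \<subseteq> {1..}"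
    and c_lim: "(\<lambda>N. cN N (q N)) \<longlonglongrightarrow> 0"
  shows "\<exists>a :: nat \<Rightarrow> real. (\<forall>N\<ge>1. a N > 0) \<and>
    (\<forall>\<epsilon>>0. (\<lambda>N. measure_pmf.prob (offspring N (q N))
        {x. \<bar>real (S_tot N x) / a N - 1\<bar> > \<epsilon>}) \<longlonglongrightarrow> 0) \<and>
    (\<exists>\<delta>>0. (\<lambda>N. measure_pmf.prob (offspring N (q N))
        {x. real (S_tot N x) - real (Max_off N x) < \<delta> * a N} / cN N (q N)) \<longlonglongrightarrow> 0)"
proof -
  define a where "a N = real (med N (q N))" for N
  define c where "c N = cN N (q N)" for N
  have c0: "(\<lambda>N. c N) \<longlonglongrightarrow> 0" using c_lim unfolding c_def .
  have amm: "a N = mm N (q N)" if "N \<ge> 2" for N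
    using mm_def[of N "q N"] pos[of N] that unfolding a_def by simp
  have acc: "c N = cc N (q N)" if "N \<ge> 2" for N
    using cc_def[of N "q N"] pos[of N] that unfolding c_def by simp
  have cnn: "c N \<ge> 0" if "N \<ge> 2" for N
    unfolding c_def by (rule cN_nonneg) (use that pos[of N] in auto)
  have apos: "\<forall>N\<ge>1. a N > 0"
  proof (intro allI impI)
    fix N :: nat assume N: "N \<ge> 1"
    have "med N (q N) \<ge> N" by (rule med_geN[OF pos[OF N] N])
    thus "a N > 0" using N unfolding a_def by simp
  qed
  have ev4: "eventually (\<lambda>N. N \<ge> (4::nat)) sequentially" by (rule eventually_ge_at_top)
  have P1: "(\<lambda>N. measure_pmf.prob (offspring N (q N)) {x. \<bar>real (S_tot N x) / a N - 1\<bar> > \<epsilon>}) \<longlonglongrightarrow> 0"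
    if eps: "\<epsilon> > 0" for \<epsilon>
  proof -
    define e where "e = \<epsilon> / 2"
    have e0: "e > 0" using eps by (simp add: e_def)
    define h where "h N = 18 * c N + 18 * c N / e^2" for N
    have h0: "h \<longlonglongrightarrow> 0" unfolding h_def
      using tendsto_add[OF tendsto_mult_right_zero[OF c0, of 18] tendsto_divide_zero[OF tendsto_mult_right_zero[OF c0, of 18], of "e^2"]]
      by (simp add: mult.commute)
    have evh: "eventually (\<lambda>N. h N < 1/2) sequentially" by (rule order_tendstoD(2)[OF h0]) simp
    show ?thesis
    proof (rule tendsto_sandwich[of "\<lambda>_. 0" _ _ h])
      show "eventually (\<lambda>N. 0 \<le> measure_pmf.prob (offspring N (q N)) {x. \<bar>real (S_tot N x) / a N - 1\<bar> > \<epsilon>}) sequentially"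
        by simp
      show "eventually (\<lambda>N. measure_pmf.prob (offspring N (q N)) {x. \<bar>real (S_tot N x) / a N - 1\<bar> > \<epsilon>} \<le> h N) sequentially"
        using ev4 evh
      proof eventually_elim
        case (elim N)
        have N2: "N \<ge> 2" using elim by simp
        have "measure_pmf.prob (offspring N (q N)) {x. 2 * e < \<bar>real (S_tot N x) / mm N (q N) - 1\<bar>}
            \<le> 18 * cc N (q N) + 18 * cc N (q N) / e^2"
          by (rule part1_bound[OF N2 pos e0]) (use elim N2 acc in \<open>auto simp: h_def\<close>)
        thus ?case using N2 amm acc by (simp add: h_def e_def)
      qed
    qed (auto intro: h0)
  qed
  have P2: "(\<lambda>N. measure_pmf.prob (offspring N (q N))
        {x. real (S_tot N x) - real (Max_off N x) < 1/8 * a N} / cN N (q N)) \<longlonglongrightarrow> 0"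
  proof -
    define h where "h N = 18 * c N + 18 * c N / (1/8)^2" for N
    have h0: "h \<longlonglongrightarrow> 0" unfolding h_def
      using tendsto_add[OF tendsto_mult_right_zero[OF c0, of 18] tendsto_divide_zero[OF tendsto_mult_right_zero[OF c0, of 18], of "(1/8)^2"]]
      by (simp add: mult.commute)
    have evh: "eventually (\<lambda>N. h N < 1/2) sequentially" by (rule order_tendstoD(2)[OF h0]) simp
    have evc: "eventually (\<lambda>N. c N < 1/1152) sequentially" by (rule order_tendstoD(2)[OF c0]) simp
    define K :: real where "K = 576"
    have g0: "(\<lambda>N. 4 * K^2 * c N) \<longlonglongrightarrow> 0" using tendsto_mult_right_zero[OF c0, of "4 * K^2"] by simp
    show ?thesis
    proof (rule tendsto_sandwich[of "\<lambda>_. 0" _ _ "\<lambda>N. 4 * K^2 * c N"])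
      show "eventually (\<lambda>N. 0 \<le> measure_pmf.prob (offspring N (q N))
        {x. real (S_tot N x) - real (Max_off N x) < 1/8 * a N} / cN N (q N)) sequentially"
        using ev4
      proof eventually_elim
        case (elim N)
        hence "c N \<ge> 0" by (intro cnn) simp
        thus ?case unfolding c_def by simp
      qed
      show "eventually (\<lambda>N. measure_pmf.prob (offspring N (q N))
        {x. real (S_tot N x) - real (Max_off N x) < 1/8 * a N} / cN N (q N) \<le> 4 * K^2 * c N) sequentially"
        using ev4 evh evc
      proof eventually_elim
        case (elim N)
        have N2: "N \<ge> 2" using elim by simp
        show ?case
        proof (cases "c N = 0")
          case True thus ?thesis unfolding c_def by simp
        next
          case False
          hence cp: "c N > 0" using cnn[OF N2] by simp
          have "measure_pmf.prob (offspring N (q N)) {x. real (S_tot N x) - real (Max_off N x) < 1/8 * mm N (q N)}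
              \<le> exp (- 1 / (576 * cc N (q N)))"
            by (rule part2_bound[OF N2 pos]) (use elim N2 acc cp in \<open>auto simp: h_def\<close>)
          hence "measure_pmf.prob (offspring N (q N)) {x. real (S_tot N x) - real (Max_off N x) < 1/8 * a N}
              \<le> exp (- 1 / (K * c N))" using N2 amm acc by (simp add: K_def)
          hence "measure_pmf.prob (offspring N (q N)) {x. real (S_tot N x) - real (Max_off N x) < 1/8 * a N} / c N
              \<le> exp (- 1 / (K * c N)) / c N" using cp by (intro divide_right_mono) auto
          also have "\<dots> \<le> 4 * K^2 * c N" by (rule exp_small) (use cp in \<open>auto simp: K_def\<close>)
          finally show ?thesis unfolding c_def .
        qed
      qed
    qed (auto intro: g0)
  qed
  show ?thesis
  proof (intro exI[of _ a] conjI)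
    show "\<forall>N\<ge>1. 0 < a N" by (rule apos)
    show "\<forall>\<epsilon>>0. (\<lambda>N. measure_pmf.prob (offspring N (q N))
        {x. \<bar>real (S_tot N x) / a N - 1\<bar> > \<epsilon>}) \<longlonglongrightarrow> 0" using P1 by blast
    show "\<exists>\<delta>>0. (\<lambda>N. measure_pmf.prob (offspring N (q N))
        {x. real (S_tot N x) - real (Max_off N x) < \<delta> * a N} / cN N (q N)) \<longlonglongrightarrow> 0"
      by (rule exI[of _ "1/8"]) (use P2 in simp)
  qed
qed

end
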